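(* Let $f=(f_1,f_2):\mathbb{R}^2\to\mathbb{R}^2$ be a smooth one-generic mapping having a cusp point at the origin with $f(\mathbf{0})=\mathbf{0}$, and suppose that $\frac{\partial f_1}{\partial x}(\mathbf{0})=\frac{\partial f_2}{\partial x}(\mathbf{0})=\frac{\partial f_2}{\partial y}(\mathbf{0})=0$, $\frac{\partial f_1}{\partial y}(\mathbf{0})\ne0$, $\frac{\partial J}{\partial x}(\mathbf{0})=0$, $\frac{\partial J}{\partial y}(\mathbf{0})\ne0$. Let $\varphi:(\mathbb{R},0)\to(\mathbb{R},0)$ be the smooth germ with $J(t,\varphi(t))\equiv0$, and set $$v_1=\frac{d^2}{dt^2}\begin{bmatrix}f_1(t,\varphi(t))\\ f_2(t,\varphi(t))\end{bmatrix}\Big|_{t=0},\qquad v_2=Df(\mathbf{0})\cdot\begin{bmatrix}\frac{\partial J}{\partial x}(\mathbf{0})\\ \frac{\partial J}{\partial y}(\mathbf{0})\end{bmatrix}.$$ Then the local topological degree of the germ $f:(\mathbb{R}^2,\mathbf{0})\to(\mathbb{R}^2,\mathbf{0})$ equals $-1$ if $v_1,v_2$ point in the same direction, and $+1$ if they point in opposite directions.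
   Context: $J=\det Df$. $f$ is one-generic if $dJ\ne0$ on $J^{-1}(0)$ (equivalently, $j^1f$ is transverse to the corank strata). A point $p\in S_1(f)=J^{-1}(0)$ with $T_pS_1(f)=\ker Df(p)$ is a cusp point if it is a simple zero of $dJ(\xi)$ on $S_1(f)$, $\xi$ a nonvanishing vector field along $S_1(f)$ in $\ker Df$. Degrees are with respect to the standard orientation of $\mathbb{R}^2$. *)

theory Defs
  imports "HOL-Complex_Analysis.Complex_Analysis"
begin

definition dx :: "(real \<times> real \<Rightarrow> real) \<Rightarrow> real \<times> real \<Rightarrow> real" where
  "dx g p = deriv (\<lambda>t. g (t, snd p)) (fst p)"

definition dy :: "(real \<times> real \<Rightarrow> real) \<Rightarrow> real \<times> real \<Rightarrow> real" where
  "dy g p = deriv (\<lambda>t. g (fst p, t)) (snd p)"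

text \<open>C-infinity functions of two real variables: differentiable with all
  partial derivatives again C-infinity (coinductively).\<close>

coinductive smooth2 :: "(real \<times> real \<Rightarrow> real) \<Rightarrow> bool" where
  "(\<And>p. (g has_derivative (\<lambda>(h,k). gx p * h + gy p * k)) (at p))
   \<Longrightarrow> smooth2 gx \<Longrightarrow> smooth2 gy \<Longrightarrow> smooth2 g"

coinductive smooth1_on :: "real set \<Rightarrow> (real \<Rightarrow> real) \<Rightarrow> bool" for S where
  "(\<And>t. t \<in> S \<Longrightarrow> (g has_real_derivative g' t) (at t))
   \<Longrightarrow> smooth1_on S g' \<Longrightarrow> smooth1_on S g"

definition jac :: "(real \<times> real \<Rightarrow> real) \<Rightarrow> (real \<times> real \<Rightarrow> real) \<Rightarrow> real \<times> real \<Rightarrow> real" where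
  "jac f1 f2 p = dx f1 p * dy f2 p - dy f1 p * dx f2 p"

definition one_generic :: "(real \<times> real \<Rightarrow> real) \<Rightarrow> (real \<times> real \<Rightarrow> real) \<Rightarrow> bool" where
  "one_generic f1 f2 \<longleftrightarrow>
     (\<forall>p. jac f1 f2 p = 0 \<longrightarrow> (dx (jac f1 f2) p, dy (jac f1 f2) p) \<noteq> (0, 0))"

text \<open>Cusp point p: p lies on S_1(f) = J^{-1}(0); (gamma1,gamma2) is a smooth regular
  local parametrisation of S_1(f) through p (gamma(0) = p); (xi1,xi2) is a smooth
  nonvanishing vector field along S_1(f) lying in ker Df; the tangent line of S_1(f)
  at p equals ker Df(p); and t \<mapsto> dJ(xi) along S_1(f) has a simple zero at p.\<close>

definition cusp_point :: "(real \<times> real \<Rightarrow> real) \<Rightarrow> (real \<times> real \<Rightarrow> real) \<Rightarrow> real \<times> real \<Rightarrow> bool" where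
  "cusp_point f1 f2 p \<longleftrightarrow> jac f1 f2 p = 0 \<and>
    (\<exists>e>0. \<exists>g1 g2 xi1 xi2.
       smooth1_on {-e<..<e} g1 \<and> smooth1_on {-e<..<e} g2 \<and>
       smooth1_on {-e<..<e} xi1 \<and> smooth1_on {-e<..<e} xi2 \<and>
       (g1 0, g2 0) = p \<and>
       (\<forall>t\<in>{-e<..<e}. jac f1 f2 (g1 t, g2 t) = 0) \<and>
       (\<forall>t\<in>{-e<..<e}. (deriv g1 t, deriv g2 t) \<noteq> (0, 0)) \<and>
       (\<forall>t\<in>{-e<..<e}. (xi1 t, xi2 t) \<noteq> (0, 0)) \<and>
       (\<forall>t\<in>{-e<..<e}.
          dx f1 (g1 t, g2 t) * xi1 t + dy f1 (g1 t, g2 t) * xi2 t = 0 \<and>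
          dx f2 (g1 t, g2 t) * xi1 t + dy f2 (g1 t, g2 t) * xi2 t = 0) \<and>
       (\<forall>v1 v2. (dx f1 p * v1 + dy f1 p * v2 = 0 \<and> dx f2 p * v1 + dy f2 p * v2 = 0)
                 \<longleftrightarrow> v1 * deriv g2 0 - v2 * deriv g1 0 = 0) \<and>
       (let h = (\<lambda>t. dx (jac f1 f2) (g1 t, g2 t) * xi1 t + dy (jac f1 f2) (g1 t, g2 t) * xi2 t)
        in h 0 = 0 \<and> deriv h 0 \<noteq> 0))"

text \<open>Local topological degree at the origin of a germ f : (R^2,0) \<rightarrow> (R^2,0):
  the winding number around 0 of the image under f of all sufficiently small
  positively oriented circles centred at 0 (R^2 identified with C, standard orientation).\<close>

definition local_degree :: "(real \<times> real \<Rightarrow> real) \<Rightarrow> (real \<times> real \<Rightarrow> real) \<Rightarrow> int" where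
  "local_degree f1 f2 = (THE d. \<exists>e>0. \<forall>r\<in>{0<..<e}.
      winding_number
        (\<lambda>s. let z = circlepath 0 r s in Complex (f1 (Re z, Im z)) (f2 (Re z, Im z))) 0
      = of_int d)"

end

theory Submission
  imports Defs
begin


lemma partial_x:
  assumes "(g has_derivative (\<lambda>(h,k). P * h + Q * k)) (at (x,y))"
  shows "((\<lambda>t. g (t,y)) has_real_derivative P) (at x)"
proof -
  have "((\<lambda>t. (t,y)) has_derivative (\<lambda>h. (h,0))) (at x)"
    by (auto intro!: derivative_eq_intros)
  from has_derivative_compose[OF this assms]
  have "((\<lambda>t. g (t,y)) has_derivative (\<lambda>h. P * h)) (at x)" by (simp add: o_def)
  then show ?thesis by (simp add: has_field_derivative_def)
qed

lemma partial_y: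
  assumes "(g has_derivative (\<lambda>(h,k). P * h + Q * k)) (at (x,y))"
  shows "((\<lambda>t. g (x,t)) has_real_derivative Q) (at y)"
proof -
  have "((\<lambda>t. (x,t)) has_derivative (\<lambda>h. (0,h))) (at y)"
    by (auto intro!: derivative_eq_intros)
  from has_derivative_compose[OF this assms]
  have "((\<lambda>t. g (x,t)) has_derivative (\<lambda>h. Q * h)) (at y)" by (simp add: o_def)
  then show ?thesis by (simp add: has_field_derivative_def)
qed

lemma dx_eq: assumes "(g has_derivative (\<lambda>(h,k). P * h + Q * k)) (at p)" shows "dx g p = P"
  using partial_x[of g P Q "fst p" "snd p"] assms unfolding dx_def by (auto intro: DERIV_imp_deriv)

lemma dy_eq: assumes "(g has_derivative (\<lambda>(h,k). P * h + Q * k)) (at p)" shows "dy g p = Q"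
  using partial_y[of g P Q "fst p" "snd p"] assms unfolding dy_def by (auto intro: DERIV_imp_deriv)

lemma smooth2_D:
  assumes "smooth2 g"
  shows "(g has_derivative (\<lambda>(h,k). dx g p * h + dy g p * k)) (at p)" "smooth2 (dx g)" "smooth2 (dy g)"
proof -
  obtain gx gy where d: "\<And>p. (g has_derivative (\<lambda>(h,k). gx p * h + gy p * k)) (at p)"
    and s: "smooth2 gx" "smooth2 gy" using assms by (cases rule: smooth2.cases) auto
  have "dx g = gx" "dy g = gy" using dx_eq[OF d] dy_eq[OF d] by auto
  then show "(g has_derivative (\<lambda>(h,k). dx g p * h + dy g p * k)) (at p)" "smooth2 (dx g)" "smooth2 (dy g)"
    using d s by auto
qed

definition C1 :: "(real \<times> real \<Rightarrow> real) \<Rightarrow> bool" where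
  "C1 g \<longleftrightarrow> (\<forall>p. (g has_derivative (\<lambda>(h,k). dx g p * h + dy g p * k)) (at p))"

lemma smooth2_C1: "smooth2 g \<Longrightarrow> C1 g"
  using smooth2_D(1) unfolding C1_def by blast

lemma C1_D: "C1 g \<Longrightarrow> (g has_derivative (\<lambda>(h,k). dx g p * h + dy g p * k)) (at p)"
  unfolding C1_def by blast

lemma C1_isCont: "C1 g \<Longrightarrow> isCont g p"
  using C1_D has_derivative_continuous by blast

lemma C1_cont: "C1 g \<Longrightarrow> continuous_on S g"
  using C1_isCont continuous_at_imp_continuous_on by blast

lemma C1_mult:
  assumes u: "C1 u" and v: "C1 v"
  shows "C1 (\<lambda>p. u p * v p)"
    "dx (\<lambda>p. u p * v p) p = dx u p * v p + u p * dx v p"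
    "dy (\<lambda>p. u p * v p) p = dy u p * v p + u p * dy v p"
proof -
  have D: "((\<lambda>p. u p * v p) has_derivative
     (\<lambda>(h,k). (dx u p * v p + u p * dx v p) * h + (dy u p * v p + u p * dy v p) * k)) (at p)" for p
    by (rule has_derivative_eq_rhs[OF has_derivative_mult[OF C1_D[OF u] C1_D[OF v]]])
       (auto simp: algebra_simps)
  show "dx (\<lambda>p. u p * v p) p = dx u p * v p + u p * dx v p"
       "dy (\<lambda>p. u p * v p) p = dy u p * v p + u p * dy v p"
    using dx_eq[OF D] dy_eq[OF D] by auto
  then show "C1 (\<lambda>p. u p * v p)" unfolding C1_def using D dx_eq[OF D] dy_eq[OF D] by presburger
qed

lemma C1_diff:
  assumes u: "C1 u" and v: "C1 v"
  shows "C1 (\<lambda>p. u p - v p)"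
    "dx (\<lambda>p. u p - v p) p = dx u p - dx v p"
    "dy (\<lambda>p. u p - v p) p = dy u p - dy v p"
proof -
  have D: "((\<lambda>p. u p - v p) has_derivative
     (\<lambda>(h,k). (dx u p - dx v p) * h + (dy u p - dy v p) * k)) (at p)" for p
    by (rule has_derivative_eq_rhs[OF has_derivative_diff[OF C1_D[OF u] C1_D[OF v]]])
       (auto simp: algebra_simps)
  show "dx (\<lambda>p. u p - v p) p = dx u p - dx v p"
       "dy (\<lambda>p. u p - v p) p = dy u p - dy v p"
    using dx_eq[OF D] dy_eq[OF D] by auto
  then show "C1 (\<lambda>p. u p - v p)" unfolding C1_def using D dx_eq[OF D] dy_eq[OF D] by presburger
qed

lemma C1_add:
  assumes u: "C1 u" and v: "C1 v"
  shows "C1 (\<lambda>p. u p + v p)"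
    "dx (\<lambda>p. u p + v p) p = dx u p + dx v p"
    "dy (\<lambda>p. u p + v p) p = dy u p + dy v p"
proof -
  have D: "((\<lambda>p. u p + v p) has_derivative
     (\<lambda>(h,k). (dx u p + dx v p) * h + (dy u p + dy v p) * k)) (at p)" for p
    by (rule has_derivative_eq_rhs[OF has_derivative_add[OF C1_D[OF u] C1_D[OF v]]])
       (auto simp: algebra_simps)
  show "dx (\<lambda>p. u p + v p) p = dx u p + dx v p"
       "dy (\<lambda>p. u p + v p) p = dy u p + dy v p"
    using dx_eq[OF D] dy_eq[OF D] by auto
  then show "C1 (\<lambda>p. u p + v p)" unfolding C1_def using D dx_eq[OF D] dy_eq[OF D] by presburger
qed

lemma C1_chain:
  assumes F: "C1 F" and ph: "(\<phi> has_real_derivative p1) (at t)"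
  shows "((\<lambda>s. F (s, \<phi> s)) has_real_derivative (dx F (t, \<phi> t) + dy F (t, \<phi> t) * p1)) (at t)"
proof -
  have c: "((\<lambda>s. (s, \<phi> s)) has_derivative (\<lambda>h. (h, h * p1))) (at t)"
    using ph unfolding has_field_derivative_def
    by (auto intro!: derivative_eq_intros simp: mult.commute)
  have "((\<lambda>s. F (s, \<phi> s)) has_derivative (\<lambda>h. (dx F (t, \<phi> t) + dy F (t, \<phi> t) * p1) * h)) (at t)"
    by (rule has_derivative_eq_rhs[OF has_derivative_compose[OF c C1_D[OF F]]])
      (auto simp: algebra_simps)
  then show ?thesis by (simp add: has_field_derivative_def)
qed


lemma C1_px: "C1 g \<Longrightarrow> ((\<lambda>t. g (t,y)) has_real_derivative dx g (x,y)) (at x)"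
  using partial_x C1_D by blast

lemma C1_py: "C1 g \<Longrightarrow> ((\<lambda>t. g (x,t)) has_real_derivative dy g (x,y)) (at y)"
  using partial_y C1_D by blast

lemma norm_small: "0 < a \<Longrightarrow> a < h \<Longrightarrow> 0 < b \<Longrightarrow> b < h \<Longrightarrow> norm (a,b) < 2*h"
  using sqrt_sum_squares_le_sum[of a b] by (simp add: norm_Pair)

lemma tri_aux: "\<bar>X - a\<bar> < \<bar>b - a\<bar>/2 \<Longrightarrow> \<bar>Y - b\<bar> < \<bar>b - a\<bar>/2 \<Longrightarrow> X = Y \<Longrightarrow> False"
  for X Y a b :: real by (simp add: abs_if split: if_splits)

lemma clairaut0:
  assumes g: "smooth2 g"
  shows "dx (dy g) (0,0) = dy (dx g) (0,0)"
proof -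
  have C: "C1 g" "C1 (dx g)" "C1 (dy g)" "C1 (dy (dx g))" "C1 (dx (dy g))"
    using g smooth2_D smooth2_C1 by metis+
  have key: "\<exists>p q. norm p < 2*h \<and> norm q < 2*h \<and> dy (dx g) p = dx (dy g) q" if h: "h > 0" for h
  proof -
    obtain \<xi> where \<xi>: "0 < \<xi>" "\<xi> < h"
      "(g (h,h) - g (h,0)) - (g (0,h) - g (0,0)) = (h - 0) * (dx g (\<xi>,h) - dx g (\<xi>,0))"
      using MVT2[OF h, of "\<lambda>s. g (s,h) - g (s,0)" "\<lambda>s. dx g (s,h) - dx g (s,0)"]
        DERIV_diff[OF C1_px[OF C(1)] C1_px[OF C(1)]] by auto
    obtain \<eta> where \<eta>: "0 < \<eta>" "\<eta> < h"
      "dx g (\<xi>,h) - dx g (\<xi>,0) = (h - 0) * dy (dx g) (\<xi>,\<eta>)"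
      using MVT2[OF h, of "\<lambda>t. dx g (\<xi>,t)" "\<lambda>t. dy (dx g) (\<xi>,t)"]
        C1_py[OF C(2)] by auto
    obtain \<eta>' where \<eta>': "0 < \<eta>'" "\<eta>' < h"
      "(g (h,h) - g (0,h)) - (g (h,0) - g (0,0)) = (h - 0) * (dy g (h,\<eta>') - dy g (0,\<eta>'))"
      using MVT2[OF h, of "\<lambda>t. g (h,t) - g (0,t)" "\<lambda>t. dy g (h,t) - dy g (0,t)"]
        DERIV_diff[OF C1_py[OF C(1)] C1_py[OF C(1)]] by auto
    obtain \<xi>' where \<xi>': "0 < \<xi>'" "\<xi>' < h"
      "dy g (h,\<eta>') - dy g (0,\<eta>') = (h - 0) * dx (dy g) (\<xi>',\<eta>')"
      using MVT2[OF h, of "\<lambda>s. dy g (s,\<eta>')" "\<lambda>s. dx (dy g) (s,\<eta>')"]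
        C1_px[OF C(3)] by auto
    have "h*h*dy (dx g) (\<xi>,\<eta>) = h*h*dx (dy g) (\<xi>',\<eta>')"
      using \<xi>(3) \<eta>(3) \<eta>'(3) \<xi>'(3) by (simp add: algebra_simps)
    then have "dy (dx g) (\<xi>,\<eta>) = dx (dy g) (\<xi>',\<eta>')" using h by simp
    then show ?thesis using norm_small \<xi> \<eta> \<xi>' \<eta>' by blast
  qed
  show ?thesis
  proof (rule ccontr)
    assume ne: "dx (dy g) (0,0) \<noteq> dy (dx g) (0,0)"
    define \<epsilon> where "\<epsilon> = \<bar>dx (dy g) (0,0) - dy (dx g) (0,0)\<bar> / 2"
    have \<epsilon>: "\<epsilon> > 0" using ne by (simp add: \<epsilon>_def)
    obtain d1 where d1: "d1 > 0" "\<And>p. dist p (0,0) < d1 \<Longrightarrow> dist (dy (dx g) p) (dy (dx g) (0,0)) < \<epsilon>"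
      using C1_isCont[OF C(4), of "(0,0)"] \<epsilon> unfolding isCont_def tendsto_iff
      by (metis (no_types, lifting) \<epsilon> continuous_at_eps_delta C1_isCont[OF C(4)] dist_commute)
    obtain d2 where d2: "d2 > 0" "\<And>p. dist p (0,0) < d2 \<Longrightarrow> dist (dx (dy g) p) (dx (dy g) (0,0)) < \<epsilon>"
      by (metis (no_types, lifting) \<epsilon> continuous_at_eps_delta C1_isCont[OF C(5)] dist_commute)
    define h where "h = min d1 d2 / 2"
    have "h > 0" using d1 d2 by (simp add: h_def)
    from key[OF this] obtain p q where pq: "norm p < 2*h" "norm q < 2*h" "dy (dx g) p = dx (dy g) q" by blast
    have "dist p (0,0) < d1" "dist q (0,0) < d2" using pq d1 d2 by (auto simp: h_def dist_norm simp flip: zero_prod_def)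
    then have "\<bar>dy (dx g) p - dy (dx g) (0,0)\<bar> < \<epsilon>" "\<bar>dx (dy g) q - dx (dy g) (0,0)\<bar> < \<epsilon>"
      using d1 d2 by (auto simp: dist_real_def)
    then show False using pq(3) tri_aux unfolding \<epsilon>_def by metis
  qed
qed



lemma tri4: "\<bar>a - b - c - d\<bar> \<le> \<bar>a\<bar> + \<bar>b\<bar> + \<bar>c\<bar> + \<bar>d\<bar>" for a b c d :: real
  by linarith

lemma tri6: "\<bar>a + b + c + d + e + f\<bar> \<le> \<bar>a\<bar> + \<bar>b\<bar> + \<bar>c\<bar> + \<bar>d\<bar> + \<bar>e\<bar> + \<bar>f\<bar>" for a b c d e f :: real
  by linarith

lemma est_arith:
  fixes x y r a P B D M K L d F2 A0 A1 A2 B0 B1 B2 B3 :: real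
  assumes r: "\<bar>x\<bar> \<le> r" "\<bar>y\<bar> \<le> r" "r \<le> 1" "0 \<le> M"
  and a: "a \<noteq> 0" and rs: "2*M*r \<le> \<bar>a\<bar>/2" and rK: "K*r \<le> \<bar>d\<bar>/2"
  and Kdef: "K = \<bar>B/a\<bar>*M*(1 + L^2 + 2*L) + M*(1 + L^2 + L)" and Ldef: "L = (\<bar>P\<bar> + M)/\<bar>a\<bar>"
  and ddef: "d = D/6 - B*P/(2*a)"
  and h1: "\<bar>A0 + A1*x + A2/2*x^2\<bar> \<le> M*\<bar>x\<bar>^3/6"
  and h2: "\<bar>A0 - a*y\<bar> \<le> M*y^2/2" and h3: "\<bar>A1\<bar> \<le> M*\<bar>y\<bar>" and h4: "\<bar>A2 - P\<bar> \<le> M*\<bar>y\<bar>"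
  and h5: "\<bar>F2 - (B0 + B1*x + B2/2*x^2 + B3/6*x^3)\<bar> \<le> M*x^4/24"
  and h6: "\<bar>B0\<bar> \<le> M*y^2/2" and h7: "\<bar>B1 - B*y\<bar> \<le> M*y^2/2" and h8: "\<bar>B2\<bar> \<le> M*\<bar>y\<bar>"
  and h9: "\<bar>B3 - D\<bar> \<le> M*\<bar>y\<bar>"
  shows "\<bar>F2 - d*x^3\<bar> \<le> \<bar>d\<bar>/2*\<bar>x\<bar>^3"
proof -
  define X where "X = \<bar>x\<bar>"
  define Y where "Y = \<bar>y\<bar>"
  have X0: "X \<ge> 0" "X \<le> r" "X \<le> 1" and Y0: "Y \<ge> 0" "Y \<le> r" using r by (auto simp: X_def Y_def)
  have a0: "\<bar>a\<bar> > 0" using a by simp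
  have L0: "L \<ge> 0" using Ldef r(4) by simp
  have K0: "K \<ge> 0" using Kdef L0 r(4) by simp
  have y2: "y^2 = Y^2" "\<bar>x\<bar>^3 = X^3" "x^4 = X^4" "\<bar>y^2\<bar> = Y^2" "\<bar>x^2\<bar> = X^2" "\<bar>x^3\<bar> = X^3"
    by (simp_all add: X_def Y_def power_even_abs power_abs)
  have XX: "X^2 \<le> X" "X^3 \<le> X^2" "X^4 \<le> X^3" "X^5 \<le> X^4"
    using power_decreasing[of 1 2 X] power_decreasing[of 2 3 X] power_decreasing[of 3 4 X]
      power_decreasing[of 4 5 X] X0 by auto
  define T where "T = M*X^3/6 + M*Y^2/2 + M*Y*X + M*Y*X^2/2"
  have eq1: "a*y + P/2*x^2 = (A0 + A1*x + A2/2*x^2) - (A0 - a*y) - A1*x - (A2 - P)/2*x^2"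
    by (simp add: field_simps)
  have t1: "\<bar>A1*x\<bar> \<le> M*Y*X" unfolding X_def Y_def abs_mult
    using h3 by (simp add: mult_right_mono)
  have t2: "\<bar>(A2 - P)/2*x^2\<bar> \<le> M*Y*X^2/2" unfolding X_def Y_def abs_mult
    using h4 by (simp add: mult_right_mono power_abs)
  have T: "\<bar>a*y + P/2*x^2\<bar> \<le> T"
  proof -
    have "\<bar>a*y + P/2*x^2\<bar> \<le> \<bar>A0 + A1*x + A2/2*x^2\<bar> + \<bar>A0 - a*y\<bar> + \<bar>A1*x\<bar> + \<bar>(A2 - P)/2*x^2\<bar>"
      unfolding eq1 by (rule tri4)
    moreover have "\<bar>A0 + A1*x + A2/2*x^2\<bar> \<le> M*X^3/6" using h1 y2 by simp
    moreover have "\<bar>A0 - a*y\<bar> \<le> M*Y^2/2" using h2 y2 by simp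
    ultimately show ?thesis unfolding T_def using t1 t2 by linarith
  qed
  have YY: "Y^2 \<le> r*Y" "M*Y*X \<le> M*r*Y" "M*Y*X^2 \<le> M*r*Y"
  proof -
    show "Y^2 \<le> r*Y" using Y0 by (simp add: power2_eq_square mult_right_mono)
    have "Y*X \<le> Y*r" using X0 Y0 by (simp add: mult_left_mono)
    then show "M*Y*X \<le> M*r*Y" using mult_left_mono[OF _ r(4)] by (metis ac_simps)
    have "Y*X^2 \<le> Y*r" using X0 Y0 XX by (simp add: mult_left_mono)
    then show "M*Y*X^2 \<le> M*r*Y" using mult_left_mono[OF _ r(4)] by (metis ac_simps)
  qed
  have m1: "M*Y^2 \<le> M*r*Y" using mult_left_mono[OF YY(1) r(4)] by (simp add: ac_simps)
  have m2: "M*X^3 \<le> M*X^2" using mult_left_mono[OF XX(2) r(4)] .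
  have T2: "T \<le> M*X^2/6 + 2*M*r*Y" unfolding T_def using YY(2,3) m1 m2 by linarith
  have "\<bar>a\<bar>*Y \<le> \<bar>P\<bar>/2*X^2 + T"
  proof -
    have "\<bar>a*y\<bar> \<le> \<bar>a*y + P/2*x^2\<bar> + \<bar>P/2*x^2\<bar>" by linarith
    moreover have "\<bar>P/2*x^2\<bar> = \<bar>P\<bar>/2*X^2" by (simp add: abs_mult X_def)
    moreover have "\<bar>a*y\<bar> = \<bar>a\<bar>*Y" by (simp add: abs_mult Y_def)
    ultimately show ?thesis using T by linarith
  qed
  also have "2*M*r*Y \<le> \<bar>a\<bar>/2*Y" using mult_right_mono[OF rs Y0(1)] .
  ultimately have "\<bar>a\<bar>*Y \<le> \<bar>P\<bar>/2*X^2 + M*X^2/6 + \<bar>a\<bar>/2*Y" using T2 by linarith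
  moreover have "(\<bar>P\<bar> + M)*X^2 = \<bar>P\<bar>*X^2 + M*X^2" by (simp add: algebra_simps)
  moreover have "M*X^2 \<ge> 0" using r(4) by simp
  ultimately have "\<bar>a\<bar>*Y \<le> (\<bar>P\<bar> + M)*X^2" by linarith
  then have YL: "Y \<le> L*X^2" using a0 unfolding Ldef by (simp add: field_simps)
  have Y2: "Y^2 \<le> L^2*X^4"
  proof -
    have "Y*Y \<le> (L*X^2)*(L*X^2)" using YL Y0 by (simp add: mult_mono)
    then show ?thesis by (simp add: power2_eq_square power4_eq_xxxx algebra_simps)
  qed
  have YX: "Y*X \<le> L*X^3" "Y*X^2 \<le> L*X^4" "Y^2*X \<le> L^2*X^4" "Y*X^3 \<le> L*X^4"
  proof -
    show "Y*X \<le> L*X^3" using mult_right_mono[OF YL X0(1)] by (simp add: power3_eq_cube power2_eq_square algebra_simps)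
    show "Y*X^2 \<le> L*X^4" using mult_right_mono[OF YL, of "X^2"] by (simp add: power2_eq_square power4_eq_xxxx algebra_simps)
    have "Y^2*X \<le> L^2*X^4*X" using mult_right_mono[OF Y2 X0(1)] .
    also have "\<dots> \<le> L^2*X^4*1" using X0 L0 by (intro mult_left_mono) auto
    finally show "Y^2*X \<le> L^2*X^4" by simp
    have "Y*X^3 \<le> L*X^2*X^3" using mult_right_mono[OF YL, of "X^3"] X0 by simp
    also have "\<dots> = L*X^5" by (simp add: power_add[symmetric] algebra_simps)
    also have "\<dots> \<le> L*X^4" using XX L0 by (simp add: mult_left_mono)
    finally show "Y*X^3 \<le> L*X^4" .
  qed
  have XT: "X*T \<le> M*(1 + L^2 + 2*L)*X^4"
  proof -
    have e: "X*T = M*(X*X^3)/6 + M*(Y^2*X)/2 + M*(Y*X^2) + M*(Y*X^3)/2"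
      unfolding T_def by (simp add: algebra_simps power2_eq_square power3_eq_cube)
    have p1: "X*X^3 = X^4" by (simp add: power4_eq_xxxx power3_eq_cube)
    have p2: "M*(Y^2*X) \<le> M*(L^2*X^4)" using mult_left_mono[OF YX(3) r(4)] .
    have p3: "M*(Y*X^2) \<le> M*(L*X^4)" using mult_left_mono[OF YX(2) r(4)] .
    have p4: "M*(Y*X^3) \<le> M*(L*X^4)" using mult_left_mono[OF YX(4) r(4)] .
    have q: "M*(1 + L^2 + 2*L)*X^4 = M*X^4 + M*(L^2*X^4) + 2*(M*(L*X^4))" by (simp add: algebra_simps)
    have n: "M*X^4 \<ge> 0" "M*(L^2*X^4) \<ge> 0" "M*(L*X^4) \<ge> 0" using r(4) L0 X0 by simp_all
    show ?thesis unfolding e p1 q using p2 p3 p4 n by linarith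
  qed
  have eq2: "F2 - d*x^3 = (F2 - (B0 + B1*x + B2/2*x^2 + B3/6*x^3)) + B0 + (B1 - B*y)*x + B2/2*x^2
       + (B3 - D)/6*x^3 + (B/a)*x*(a*y + P/2*x^2)"
    using a unfolding ddef by (simp add: field_simps power2_eq_square power3_eq_cube)
  have b1: "\<bar>(B1 - B*y)*x\<bar> \<le> M*(Y^2*X)/2"
  proof -
    have "\<bar>(B1 - B*y)*x\<bar> = \<bar>B1 - B*y\<bar>*X" by (simp add: abs_mult X_def)
    also have "\<dots> \<le> M*Y^2/2*X"
    proof -
      have "\<bar>B1 - B*y\<bar> \<le> M*Y^2/2" using h7 y2 by simp
      from mult_right_mono[OF this X0(1)] show ?thesis .
    qed
    finally show ?thesis by simp
  qed
  have b2: "\<bar>B2/2*x^2\<bar> \<le> M*(Y*X^2)/2"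
  proof -
    have "\<bar>B2/2*x^2\<bar> = \<bar>B2\<bar>/2*X^2" by (simp add: abs_mult X_def)
    also have "\<dots> \<le> M*Y/2*X^2" using mult_right_mono[OF _ zero_le_power2[of X]] h8
      by (simp add: Y_def divide_right_mono)
    finally show ?thesis by simp
  qed
  have b3: "\<bar>(B3 - D)/6*x^3\<bar> \<le> M*(Y*X^3)/6"
  proof -
    have "\<bar>(B3 - D)/6*x^3\<bar> = \<bar>B3 - D\<bar>/6*X^3" by (simp add: abs_mult X_def power_abs)
    also have "\<dots> \<le> M*Y/6*X^3" using mult_right_mono[OF _ zero_le_power[OF X0(1), of 3]] h9
      by (simp add: Y_def divide_right_mono)
    finally show ?thesis by simp
  qed
  have b4: "\<bar>(B/a)*x*(a*y + P/2*x^2)\<bar> \<le> \<bar>B/a\<bar>*(X*T)"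
  proof -
    have "\<bar>(B/a)*x*(a*y + P/2*x^2)\<bar> = \<bar>B/a\<bar>*(X*\<bar>a*y + P/2*x^2\<bar>)"
      by (simp add: abs_mult X_def)
    also have "\<dots> \<le> \<bar>B/a\<bar>*(X*T)"
      by (rule mult_left_mono[OF mult_left_mono[OF T X0(1)]]) simp
    finally show ?thesis .
  qed
  have "\<bar>F2 - d*x^3\<bar> \<le> M*X^4/24 + M*Y^2/2 + M*(Y^2*X)/2 + M*(Y*X^2)/2 + M*(Y*X^3)/6 + \<bar>B/a\<bar>*(X*T)"
  proof -
    have "\<bar>B0\<bar> \<le> M*Y^2/2" using h6 y2 by simp
    moreover have "\<bar>F2 - (B0 + B1*x + B2/2*x^2 + B3/6*x^3)\<bar> \<le> M*X^4/24" using h5 y2 by simp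
    moreover have "\<bar>F2 - d*x^3\<bar> \<le> \<bar>F2 - (B0 + B1*x + B2/2*x^2 + B3/6*x^3)\<bar> + \<bar>B0\<bar> + \<bar>(B1 - B*y)*x\<bar> + \<bar>B2/2*x^2\<bar>
       + \<bar>(B3 - D)/6*x^3\<bar> + \<bar>(B/a)*x*(a*y + P/2*x^2)\<bar>"
      unfolding eq2 by (rule tri6)
    ultimately show ?thesis using b1 b2 b3 b4 by linarith
  qed
  also have "\<dots> \<le> K*X^4"
  proof -
    have p2: "M*Y^2 \<le> M*(L^2*X^4)" using mult_left_mono[OF Y2 r(4)] .
    have p3: "M*(Y^2*X) \<le> M*(L^2*X^4)" using mult_left_mono[OF YX(3) r(4)] .
    have p4: "M*(Y*X^2) \<le> M*(L*X^4)" using mult_left_mono[OF YX(2) r(4)] .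
    have p5: "M*(Y*X^3) \<le> M*(L*X^4)" using mult_left_mono[OF YX(4) r(4)] .
    have p6: "\<bar>B/a\<bar>*(X*T) \<le> \<bar>B/a\<bar>*(M*(1 + L^2 + 2*L)*X^4)" by (rule mult_left_mono[OF XT]) simp
    have q: "K*X^4 = \<bar>B/a\<bar>*(M*(1 + L^2 + 2*L)*X^4) + M*X^4 + M*(L^2*X^4) + M*(L*X^4)"
      unfolding Kdef by (simp add: algebra_simps)
    have n: "M*X^4 \<ge> 0" "M*(L^2*X^4) \<ge> 0" "M*(L*X^4) \<ge> 0" using r(4) L0 X0 by simp_all
    show ?thesis unfolding q using p2 p3 p4 p5 p6 n by linarith
  qed
  also have "\<dots> \<le> K*(r*X^3)"
  proof -
    have "X^4 = X*X^3" by (simp add: power3_eq_cube power4_eq_xxxx)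
    also have "\<dots> \<le> r*X^3" using mult_right_mono[OF X0(2) zero_le_power[OF X0(1), of 3]] .
    finally have "X^4 \<le> r*X^3" .
    then show ?thesis using K0 by (simp add: mult_left_mono)
  qed
  also have "\<dots> \<le> \<bar>d\<bar>/2*X^3" using mult_right_mono[OF rK zero_le_power[OF X0(1), of 3]] by (simp add: mult.assoc)
  finally show ?thesis by (simp add: X_def)
qed



lemma smooth2_iter_x: "smooth2 g \<Longrightarrow> smooth2 ((dx^^n) g)"
  by (induction n) (auto intro: smooth2_D)

lemma smooth2_iter_y: "smooth2 g \<Longrightarrow> smooth2 ((dy^^n) g)"
  by (induction n) (auto intro: smooth2_D)

lemma sum_at0: "n > 0 \<Longrightarrow> (\<Sum>m<n. c m / fact m * (0::real)^m) = c 0"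
  by (cases n) (simp_all add: sum.lessThan_Suc_shift)

lemma taylor_x:
  assumes g: "smooth2 g" and n: "n > 0" and M: "\<And>t. \<bar>t\<bar> \<le> \<bar>x\<bar> \<Longrightarrow> \<bar>(dx^^n) g (t,y)\<bar> \<le> M"
  shows "\<bar>g (x,y) - (\<Sum>m<n. (dx^^m) g (0,y) / fact m * x^m)\<bar> \<le> M*\<bar>x\<bar>^n / fact n"
proof (cases "x = 0")
  case True
  then show ?thesis using n sum_at0[OF n, of "\<lambda>m. (dx^^m) g (0,y)"] by (simp add: power_0_left)
next
  case False
  have D: "\<forall>m t. m < n \<and> -\<bar>x\<bar> \<le> t \<and> t \<le> \<bar>x\<bar> \<longrightarrow>
     ((\<lambda>t. (dx^^m) g (t,y)) has_real_derivative (dx^^Suc m) g (t,y)) (at t)"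
    using C1_px[OF smooth2_C1[OF smooth2_iter_x[OF g]]] by simp
  have ex: "\<exists>t. (if x < 0 then x < t \<and> t < 0 else 0 < t \<and> t < x) \<and> g (x,y) = (\<Sum>m<n. (dx^^m) g (0,y) / fact m * (x - 0)^m) + (dx^^n) g (t,y) / fact n * (x - 0)^n"
    by (rule Taylor[of n "\<lambda>m t. (dx^^m) g (t,y)" "\<lambda>t. g (t,y)" "-\<bar>x\<bar>" "\<bar>x\<bar>" 0 x, OF n _ D]) (use False in auto)
  then obtain t where t: "(if x < 0 then x < t \<and> t < 0 else 0 < t \<and> t < x)" "g (x,y) = (\<Sum>m<n. (dx^^m) g (0,y) / fact m * (x - 0)^m) + (dx^^n) g (t,y) / fact n * (x - 0)^n" by blast
  have "\<bar>t\<bar> \<le> \<bar>x\<bar>" using t(1) by (auto split: if_splits)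
  then have "\<bar>(dx^^n) g (t,y)\<bar> \<le> M" by (rule M)
  then have "\<bar>(dx^^n) g (t,y)\<bar> * \<bar>x\<bar>^n / fact n \<le> M * \<bar>x\<bar>^n / fact n"
    by (intro divide_right_mono mult_right_mono) auto
  then show ?thesis using t(2) by (simp add: abs_mult power_abs)
qed

lemma taylor_y:
  assumes g: "smooth2 g" and n: "n > 0" and M: "\<And>t. \<bar>t\<bar> \<le> \<bar>y\<bar> \<Longrightarrow> \<bar>(dy^^n) g (x,t)\<bar> \<le> M"
  shows "\<bar>g (x,y) - (\<Sum>m<n. (dy^^m) g (x,0) / fact m * y^m)\<bar> \<le> M*\<bar>y\<bar>^n / fact n"
proof (cases "y = 0")
  case True
  then show ?thesis using n sum_at0[OF n, of "\<lambda>m. (dy^^m) g (x,0)"] by (simp add: power_0_left)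
next
  case False
  have D: "\<forall>m t. m < n \<and> -\<bar>y\<bar> \<le> t \<and> t \<le> \<bar>y\<bar> \<longrightarrow>
     ((\<lambda>t. (dy^^m) g (x,t)) has_real_derivative (dy^^Suc m) g (x,t)) (at t)"
    using C1_py[OF smooth2_C1[OF smooth2_iter_y[OF g]]] by simp
  have ex: "\<exists>t. (if y < 0 then y < t \<and> t < 0 else 0 < t \<and> t < y) \<and> g (x,y) = (\<Sum>m<n. (dy^^m) g (x,0) / fact m * (y - 0)^m) + (dy^^n) g (x,t) / fact n * (y - 0)^n"
    by (rule Taylor[of n "\<lambda>m t. (dy^^m) g (x,t)" "\<lambda>t. g (x,t)" "-\<bar>y\<bar>" "\<bar>y\<bar>" 0 y, OF n _ D]) (use False in auto)
  then obtain t where t: "(if y < 0 then y < t \<and> t < 0 else 0 < t \<and> t < y)" "g (x,y) = (\<Sum>m<n. (dy^^m) g (x,0) / fact m * (y - 0)^m) + (dy^^n) g (x,t) / fact n * (y - 0)^n" by blast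
  have "\<bar>t\<bar> \<le> \<bar>y\<bar>" using t(1) by (auto split: if_splits)
  then have "\<bar>(dy^^n) g (x,t)\<bar> \<le> M" by (rule M)
  then have "\<bar>(dy^^n) g (x,t)\<bar> * \<bar>y\<bar>^n / fact n \<le> M * \<bar>y\<bar>^n / fact n"
    by (intro divide_right_mono mult_right_mono) auto
  then show ?thesis using t(2) by (simp add: abs_mult power_abs)
qed

lemma bound1:
  assumes "smooth2 g"
  shows "\<exists>M. \<forall>x y. \<bar>x\<bar> \<le> 1 \<longrightarrow> \<bar>y\<bar> \<le> 1 \<longrightarrow> \<bar>g (x,y)\<bar> \<le> M"
proof -
  have "compact ({-1..1::real} \<times> {-1..1::real})" by (intro compact_Times compact_Icc)
  moreover have "continuous_on ({-1..1::real} \<times> {-1..1::real}) g"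
    by (rule C1_cont[OF smooth2_C1[OF assms]])
  ultimately have "bounded (g ` ({-1..1} \<times> {-1..1}))"
    by (intro compact_imp_bounded compact_continuous_image)
  then obtain M where "\<forall>z\<in>g ` ({-1..1} \<times> {-1..1}). norm z \<le> M" unfolding bounded_iff by blast
  then show ?thesis by (intro exI[of _ M]) (force simp: abs_le_iff)
qed

lemma boundG:
  assumes "finite G" "\<forall>g\<in>G. smooth2 g"
  shows "\<exists>M\<ge>0. \<forall>g\<in>G. \<forall>x y. \<bar>x\<bar> \<le> 1 \<longrightarrow> \<bar>y\<bar> \<le> 1 \<longrightarrow> \<bar>g (x,y)\<bar> \<le> M"
  using assms
proof (induction G rule: finite_induct)
  case empty
  then show ?case by auto
next
  case (insert h G)
  then obtain M where M: "M \<ge> 0" "\<forall>g\<in>G. \<forall>x y. \<bar>x\<bar> \<le> 1 \<longrightarrow> \<bar>y\<bar> \<le> 1 \<longrightarrow> \<bar>g (x,y)\<bar> \<le> M" by auto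
  have "smooth2 h" using insert.prems by auto
  then obtain M' where M': "\<forall>x y. \<bar>x\<bar> \<le> 1 \<longrightarrow> \<bar>y\<bar> \<le> 1 \<longrightarrow> \<bar>h (x,y)\<bar> \<le> M'"
    using bound1 by blast
  show ?case
    by (rule exI[of _ "max M M'"]) (use M M' in \<open>auto intro: le_max_iff_disj[THEN iffD2]\<close>)
qed



lemma sum3: "(\<Sum>m<3. (dx^^m) g p / fact m * (x::real)^m) = g p + dx g p * x + dx (dx g) p / 2 * x^2"
  by (simp add: eval_nat_numeral)

lemma sum4: "(\<Sum>m<4. (dx^^m) g p / fact m * (x::real)^m) = g p + dx g p * x + dx (dx g) p / 2 * x^2 + dx (dx (dx g)) p / 6 * x^3"
  by (simp add: eval_nat_numeral)

lemma sum2y: "(\<Sum>m<2. (dy^^m) g p / fact m * (y::real)^m) = g p + dy g p * y"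
  by (simp add: eval_nat_numeral)

lemma sum1y: "(\<Sum>m<1. (dy^^m) g p / fact m * (y::real)^m) = g p"
  by simp


lemma local_est:
  assumes s1: "smooth2 f1" and s2: "smooth2 f2"
   and f0: "f1 (0,0) = 0" "f2 (0,0) = 0"
   and d0: "dx f1 (0,0) = 0" "dx f2 (0,0) = 0" "dy f2 (0,0) = 0"
   and a: "a = dy f1 (0,0)" "a \<noteq> 0"
   and A0: "dx (dx f2) (0,0) = 0"
   and dd: "d = dx (dx (dx f2)) (0,0)/6 - dy (dx f2) (0,0) * dx (dx f1) (0,0) / (2*a)" "d \<noteq> 0"
  shows "\<exists>r0>0. (\<forall>x y. \<bar>x\<bar> \<le> r0 \<longrightarrow> \<bar>y\<bar> \<le> r0 \<longrightarrow> f1 (x,y) = 0 \<longrightarrow> \<bar>f2 (x,y) - d*x^3\<bar> \<le> \<bar>d\<bar>/2*\<bar>x\<bar>^3)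
     \<and> (\<forall>y. \<bar>y\<bar> \<le> r0 \<longrightarrow> y \<noteq> 0 \<longrightarrow> a*y*f1 (0,y) > 0)"
proof -
  define G where "G = {dx (dx (dx f1)), dx (dx (dx (dx f2))), dy (dy f1), dy (dx f1), dy (dx (dx f1)),
     dy (dy f2), dy (dy (dx f2)), dy (dx (dx f2)), dy (dx (dx (dx f2)))}"
  have S: "smooth2 (dx f1)" "smooth2 (dx (dx f1))" "smooth2 (dx f2)" "smooth2 (dx (dx f2))" "smooth2 (dx (dx (dx f2)))"
    using s1 s2 smooth2_D(2) by blast+
  have "finite G" "\<forall>g\<in>G. smooth2 g" unfolding G_def using s1 s2 smooth2_D(2,3) by auto
  from boundG[OF this] obtain M where M0: "M \<ge> 0"
    and Mb: "\<And>g x y. g \<in> G \<Longrightarrow> \<bar>x\<bar> \<le> 1 \<Longrightarrow> \<bar>y\<bar> \<le> 1 \<Longrightarrow> \<bar>g (x,y)\<bar> \<le> M" by blast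
  define P where "P = dx (dx f1) (0,0)"
  define B where "B = dy (dx f2) (0,0)"
  define D where "D = dx (dx (dx f2)) (0,0)"
  define L where "L = (\<bar>P\<bar> + M)/\<bar>a\<bar>"
  define K where "K = \<bar>B/a\<bar>*M*(1 + L^2 + 2*L) + M*(1 + L^2 + L)"
  have L0: "L \<ge> 0" using M0 by (simp add: L_def)
  have K0: "K \<ge> 0" using M0 L0 by (simp add: K_def)
  define r0 where "r0 = min 1 (min (\<bar>a\<bar>/(4*M+1)) (\<bar>d\<bar>/(2*K+1)))"
  have r0: "r0 > 0" "r0 \<le> 1" using a dd M0 K0 by (auto simp: r0_def)
  have rs: "2*M*r0 \<le> \<bar>a\<bar>/2"
  proof -
    have "r0 \<le> \<bar>a\<bar>/(4*M+1)" by (simp add: r0_def)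
    from mult_left_mono[OF this, of "2*M"] have "2*M*r0 \<le> 2*M*(\<bar>a\<bar>/(4*M+1))" using M0 by simp
    also have "\<dots> \<le> \<bar>a\<bar>/2" using M0 by (simp add: field_simps)
    finally show ?thesis .
  qed
  have rK: "K*r0 \<le> \<bar>d\<bar>/2"
  proof -
    have "r0 \<le> \<bar>d\<bar>/(2*K+1)" by (simp add: r0_def)
    from mult_left_mono[OF this K0] have "K*r0 \<le> K*(\<bar>d\<bar>/(2*K+1))" .
    also have "\<dots> \<le> \<bar>d\<bar>/2" using K0 by (simp add: field_simps)
    finally show ?thesis .
  qed
  have h2: "\<bar>f1 (0,y) - a*y\<bar> \<le> M*y^2/2" if "\<bar>y\<bar> \<le> 1" for y
  proof -
    have "\<bar>f1 (0,y) - (\<Sum>m<2. (dy^^m) f1 (0,0) / fact m * y^m)\<bar> \<le> M*\<bar>y\<bar>^2 / fact 2"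
      by (rule taylor_y[OF s1]) (use that in \<open>auto intro!: Mb simp: G_def eval_nat_numeral\<close>)
    then show ?thesis using f0 a unfolding sum2y by simp
  qed
  have est: "\<bar>f2 (x,y) - d*x^3\<bar> \<le> \<bar>d\<bar>/2*\<bar>x\<bar>^3"
    if xy: "\<bar>x\<bar> \<le> r0" "\<bar>y\<bar> \<le> r0" and z: "f1 (x,y) = 0" for x y
  proof -
    have x1: "\<bar>x\<bar> \<le> 1" and y1: "\<bar>y\<bar> \<le> 1" using xy r0 by auto
    have h1: "\<bar>f1 (0,y) + dx f1 (0,y)*x + dx (dx f1) (0,y)/2*x^2\<bar> \<le> M*\<bar>x\<bar>^3/6"
    proof -
      have "\<bar>f1 (x,y) - (\<Sum>m<3. (dx^^m) f1 (0,y) / fact m * x^m)\<bar> \<le> M*\<bar>x\<bar>^3 / fact 3"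
        by (rule taylor_x[OF s1]) (use x1 y1 in \<open>auto intro!: Mb simp: G_def eval_nat_numeral\<close>)
      moreover have "fact 3 = (6::real)" by (simp add: eval_nat_numeral)
      ultimately show ?thesis unfolding sum3 z by (simp only: diff_0 abs_minus_cancel)
    qed
    have h3: "\<bar>dx f1 (0,y)\<bar> \<le> M*\<bar>y\<bar>"
    proof -
      have "\<bar>dx f1 (0,y) - (\<Sum>m<1. (dy^^m) (dx f1) (0,0) / fact m * y^m)\<bar> \<le> M*\<bar>y\<bar>^1 / fact 1"
        by (rule taylor_y[OF S(1)]) (use y1 in \<open>auto intro!: Mb simp: G_def\<close>)
      then show ?thesis using d0 by simp
    qed
    have h4: "\<bar>dx (dx f1) (0,y) - P\<bar> \<le> M*\<bar>y\<bar>"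
    proof -
      have "\<bar>dx (dx f1) (0,y) - (\<Sum>m<1. (dy^^m) (dx (dx f1)) (0,0) / fact m * y^m)\<bar> \<le> M*\<bar>y\<bar>^1 / fact 1"
        by (rule taylor_y[OF S(2)]) (use y1 in \<open>auto intro!: Mb simp: G_def\<close>)
      then show ?thesis by (simp add: P_def)
    qed
    have h5: "\<bar>f2 (x,y) - (f2 (0,y) + dx f2 (0,y)*x + dx (dx f2) (0,y)/2*x^2 + dx (dx (dx f2)) (0,y)/6*x^3)\<bar> \<le> M*x^4/24"
    proof -
      have "\<bar>f2 (x,y) - (\<Sum>m<4. (dx^^m) f2 (0,y) / fact m * x^m)\<bar> \<le> M*\<bar>x\<bar>^4 / fact 4"
        by (rule taylor_x[OF s2]) (use x1 y1 in \<open>auto intro!: Mb simp: G_def eval_nat_numeral\<close>)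
      moreover have "\<bar>x\<bar>^4 = x^4" by (simp add: power_even_abs)
      ultimately show ?thesis unfolding sum4 by (simp add: eval_nat_numeral)
    qed
    have h6: "\<bar>f2 (0,y)\<bar> \<le> M*y^2/2"
    proof -
      have "\<bar>f2 (0,y) - (\<Sum>m<2. (dy^^m) f2 (0,0) / fact m * y^m)\<bar> \<le> M*\<bar>y\<bar>^2 / fact 2"
        by (rule taylor_y[OF s2]) (use y1 in \<open>auto intro!: Mb simp: G_def eval_nat_numeral\<close>)
      then show ?thesis using f0 d0 unfolding sum2y by simp
    qed
    have h7: "\<bar>dx f2 (0,y) - B*y\<bar> \<le> M*y^2/2"
    proof -
      have "\<bar>dx f2 (0,y) - (\<Sum>m<2. (dy^^m) (dx f2) (0,0) / fact m * y^m)\<bar> \<le> M*\<bar>y\<bar>^2 / fact 2"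
        by (rule taylor_y[OF S(3)]) (use y1 in \<open>auto intro!: Mb simp: G_def eval_nat_numeral\<close>)
      then show ?thesis using d0 unfolding sum2y by (simp add: B_def)
    qed
    have h8: "\<bar>dx (dx f2) (0,y)\<bar> \<le> M*\<bar>y\<bar>"
    proof -
      have "\<bar>dx (dx f2) (0,y) - (\<Sum>m<1. (dy^^m) (dx (dx f2)) (0,0) / fact m * y^m)\<bar> \<le> M*\<bar>y\<bar>^1 / fact 1"
        by (rule taylor_y[OF S(4)]) (use y1 in \<open>auto intro!: Mb simp: G_def\<close>)
      then show ?thesis using A0 by simp
    qed
    have h9: "\<bar>dx (dx (dx f2)) (0,y) - D\<bar> \<le> M*\<bar>y\<bar>"
    proof -
      have "\<bar>dx (dx (dx f2)) (0,y) - (\<Sum>m<1. (dy^^m) (dx (dx (dx f2))) (0,0) / fact m * y^m)\<bar> \<le> M*\<bar>y\<bar>^1 / fact 1"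
        by (rule taylor_y[OF S(5)]) (use y1 in \<open>auto intro!: Mb simp: G_def\<close>)
      then show ?thesis by (simp add: D_def)
    qed
    show ?thesis
      by (rule est_arith[OF xy r0(2) M0 a(2) rs rK K_def L_def _ h1 h2[OF y1] h3 h4 h5 h6 h7 h8 h9])
        (simp add: dd(1) D_def B_def P_def)
  qed
  have sgn: "a*y*f1 (0,y) > 0" if y: "\<bar>y\<bar> \<le> r0" "y \<noteq> 0" for y
  proof -
    have y1: "\<bar>y\<bar> \<le> 1" using y r0 by auto
    have "M*y^2/2 \<le> M*(r0*\<bar>y\<bar>)/2"
    proof -
      have "y^2 = \<bar>y\<bar>*\<bar>y\<bar>" by (simp add: power2_eq_square)
      also have "\<dots> \<le> r0*\<bar>y\<bar>" using mult_right_mono[OF y(1) abs_ge_zero[of y]] .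
      finally have "y^2 \<le> r0*\<bar>y\<bar>" .
      then show ?thesis using M0 by (simp add: mult_left_mono)
    qed
    also have "\<dots> \<le> \<bar>a\<bar>/8*\<bar>y\<bar>"
    proof -
      have "M*r0 \<le> \<bar>a\<bar>/4" using rs by linarith
      from mult_right_mono[OF this abs_ge_zero[of y]] show ?thesis by (simp add: mult.assoc)
    qed
    finally have e: "\<bar>f1 (0,y) - a*y\<bar> \<le> \<bar>a\<bar>/8*\<bar>y\<bar>" using h2[OF y1] by linarith
    have "\<bar>a*y*(f1 (0,y) - a*y)\<bar> \<le> \<bar>a*y\<bar>*(\<bar>a\<bar>/8*\<bar>y\<bar>)"
      unfolding abs_mult[of "a*y"] by (rule mult_left_mono[OF e]) simp
    also have "\<dots> = (a*y)^2/8" by (simp add: abs_mult power2_eq_square)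
    finally have "a*y*(f1 (0,y) - a*y) \<ge> -((a*y)^2/8)" unfolding abs_le_iff by linarith
    moreover have "a*y*f1 (0,y) = a*y*(f1 (0,y) - a*y) + (a*y)^2" by (simp add: algebra_simps power2_eq_square)
    ultimately have "a*y*f1 (0,y) \<ge> (a*y)^2 - (a*y)^2/8" by linarith
    moreover have "(a*y)^2 > 0" using a y by simp
    ultimately show ?thesis by linarith
  qed
  show ?thesis using est sgn r0 by blast
qed



lemma norm_circ: "0 < r \<Longrightarrow> cmod (circlepath 0 r s) = r"
  by (simp add: circlepath norm_mult)

lemma circ10: "circlepath 0 r 1 = circlepath 0 r 0"
  using pathfinish_circlepath pathstart_circlepath unfolding pathfinish_def pathstart_def by metis

lemma seg0:
  assumes "\<And>u. 0 \<le> u \<Longrightarrow> u \<le> 1 \<Longrightarrow> (1-u)*Re A + u*Re B \<noteq> 0 \<or> (1-u)*Im A + u*Im B \<noteq> 0"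
  shows "0 \<notin> closed_segment A B"
proof
  assume "0 \<in> closed_segment A B"
  then obtain u where u: "0 \<le> u" "u \<le> 1" "0 = (1-u) *\<^sub>R A + u *\<^sub>R B"
    unfolding closed_segment_def by auto
  then have "(1-u)*Re A + u*Re B = 0" "(1-u)*Im A + u*Im B = 0"
    by (simp_all add: complex_eq_iff)
  with assms[OF u(1,2)] show False by simp
qed

lemma path_F:
  assumes "continuous_on UNIV g1" "continuous_on UNIV g2"
  shows "path (\<lambda>s. Complex (g1 (Re (circlepath 0 r s), Im (circlepath 0 r s)))
                             (g2 (Re (circlepath 0 r s), Im (circlepath 0 r s))))"
proof -
  have c: "continuous_on {0..1} (circlepath 0 r)" using path_circlepath path_def by blast
  have "continuous_on {0..1} (\<lambda>s. (Re (circlepath 0 r s), Im (circlepath 0 r s)))"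
    by (intro continuous_intros c)
  then have "continuous_on {0..1} (\<lambda>s. g1 (Re (circlepath 0 r s), Im (circlepath 0 r s)))"
            "continuous_on {0..1} (\<lambda>s. g2 (Re (circlepath 0 r s), Im (circlepath 0 r s)))"
    using continuous_on_compose2[OF assms(1)] continuous_on_compose2[OF assms(2)] by auto
  then show ?thesis unfolding path_def Complex_eq
    by (intro continuous_intros)
qed

lemma loop_F: "pathfinish (\<lambda>s. Complex (g1 (Re (circlepath 0 r s), Im (circlepath 0 r s)))
                             (g2 (Re (circlepath 0 r s), Im (circlepath 0 r s)))) =
  pathstart (\<lambda>s. Complex (g1 (Re (circlepath 0 r s), Im (circlepath 0 r s)))
                             (g2 (Re (circlepath 0 r s), Im (circlepath 0 r s))))"
proof -
  have "circlepath 0 r 1 = circlepath 0 r 0"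
    using pathfinish_circlepath pathstart_circlepath unfolding pathfinish_def pathstart_def by metis
  then show ?thesis unfolding pathfinish_def pathstart_def by simp
qed


lemma degree_core:
  fixes f1 f2 :: "real \<times> real \<Rightarrow> real" and a d r0 :: real
  assumes cont: "continuous_on UNIV f1" "continuous_on UNIV f2"
   and a: "a \<noteq> 0" and d: "d \<noteq> 0" and r0: "r0 > 0"
   and est: "\<And>x y. \<bar>x\<bar> \<le> r0 \<Longrightarrow> \<bar>y\<bar> \<le> r0 \<Longrightarrow> f1 (x,y) = 0 \<Longrightarrow> \<bar>f2 (x,y) - d*x^3\<bar> \<le> \<bar>d\<bar>/2 * \<bar>x\<bar>^3"
   and sgn: "\<And>y. \<bar>y\<bar> \<le> r0 \<Longrightarrow> y \<noteq> 0 \<Longrightarrow> a*y*f1(0,y) > 0"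
  shows "local_degree f1 f2 = (if a*d > 0 then -1 else 1)"
proof -
  define D0 :: int where "D0 = (if a*d > 0 then -1 else 1)"
  have pt1: "(1-u)*f1(x,y) + u*f1(x,y) \<noteq> 0 \<or> (1-u)*f2(x,y) + u*(d*x^3) \<noteq> 0"
    if "\<bar>x\<bar> \<le> r0" "\<bar>y\<bar> \<le> r0" "(x,y) \<noteq> (0,0)" "0 \<le> u" "u \<le> 1" for x y u
  proof (cases "f1(x,y) = 0")
    case True
    note e = est[OF that(1,2) True]
    show ?thesis
    proof (rule disjI2, rule notI)
      assume h: "(1-u)*f2(x,y) + u*(d*x^3) = 0"
      have "d*x^3 = (1-u)*(d*x^3 - f2(x,y))" using h by (simp add: algebra_simps)
      then have "\<bar>d*x^3\<bar> = \<bar>(1-u)*(d*x^3 - f2(x,y))\<bar>" by simp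
      then have "\<bar>d\<bar>*\<bar>x\<bar>^3 = (1-u)*\<bar>f2(x,y) - d*x^3\<bar>"
        using that(4,5) by (simp add: abs_mult power_abs abs_minus_commute)
      also have "\<dots> \<le> \<bar>f2(x,y) - d*x^3\<bar>" using that(4,5)
        by (simp add: mult_left_le_one_le)
      finally have "\<bar>d\<bar>*\<bar>x\<bar>^3 \<le> \<bar>d\<bar>/2*\<bar>x\<bar>^3" using e by linarith
      then have "\<bar>x\<bar>^3 \<le> 0" using d by (simp add: field_simps)
      then have "\<bar>x\<bar>^3 = 0" using zero_le_power[of "\<bar>x\<bar>" 3] by linarith
      then have "x = 0" by simp
      then have "y \<noteq> 0" using that(3) by auto
      from sgn[OF that(2) this] True \<open>x = 0\<close> show False by simp
    qed
  qed (simp add: algebra_simps)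
  have pt2: "(1-u)*f1(x,y) + u*(a*y) \<noteq> 0 \<or> (1-u)*(d*x^3) + u*(d*x) \<noteq> 0"
    if "\<bar>x\<bar> \<le> r0" "\<bar>y\<bar> \<le> r0" "(x,y) \<noteq> (0,0)" "0 \<le> u" "u \<le> 1" for x y u
  proof (cases "x = 0")
    case True
    then have y: "y \<noteq> 0" using that(3) by auto
    have s: "a*y*f1(0,y) > 0" using sgn[OF that(2) y] .
    have "a*y*((1-u)*f1(0,y) + u*(a*y)) = (1-u)*(a*y*f1(0,y)) + u*(a*y)^2"
      by (simp add: algebra_simps power2_eq_square)
    also have "\<dots> > 0"
    proof (cases "u = 0")
      case True then show ?thesis using s by simp
    next
      case False
      then have "u*(a*y)^2 > 0" using that(4) a y by simp
      moreover have "(1-u)*(a*y*f1(0,y)) \<ge> 0" using s that(5) by simp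
      ultimately show ?thesis by linarith
    qed
    finally show ?thesis using True by auto
  next
    case False
    have "(1-u)*x^2 + u > 0"
    proof (cases "u = 0")
      case True then show ?thesis using False by simp
    next
      case False then show ?thesis using that(4,5) by (simp add: add_nonneg_pos)
    qed
    then have "d*x*((1-u)*x^2 + u) \<noteq> 0" using d False by simp
    moreover have "d*x*((1-u)*x^2 + u) = (1-u)*(d*x^3) + u*(d*x)"
      by (simp add: algebra_simps power3_eq_cube power2_eq_square)
    ultimately show ?thesis by simp
  qed
  have W: "winding_number (\<lambda>s. let z = circlepath 0 r s in Complex (f1 (Re z, Im z)) (f2 (Re z, Im z))) 0
           = of_int D0" if r: "0 < r" "r < r0" for r
  proof -
    define \<gamma> where "\<gamma> = circlepath 0 r"
    have xy: "\<bar>Re (\<gamma> s)\<bar> \<le> r0" "\<bar>Im (\<gamma> s)\<bar> \<le> r0" "(Re (\<gamma> s), Im (\<gamma> s)) \<noteq> (0,0)" for s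
    proof -
      have n: "cmod (\<gamma> s) = r" unfolding \<gamma>_def using norm_circ[OF r(1)] .
      show "\<bar>Re (\<gamma> s)\<bar> \<le> r0" using abs_Re_le_cmod[of "\<gamma> s"] n r by linarith
      show "\<bar>Im (\<gamma> s)\<bar> \<le> r0" using abs_Im_le_cmod[of "\<gamma> s"] n r by linarith
      show "(Re (\<gamma> s), Im (\<gamma> s)) \<noteq> (0,0)" using n r by (auto simp: complex_eq_iff)
    qed
    define F where "F = (\<lambda>s. Complex (f1 (Re (\<gamma> s), Im (\<gamma> s))) (f2 (Re (\<gamma> s), Im (\<gamma> s))))"
    define G where "G = (\<lambda>s. Complex (f1 (Re (\<gamma> s), Im (\<gamma> s))) ((\<lambda>p. d*(fst p)^3) (Re (\<gamma> s), Im (\<gamma> s))))"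
    define L where "L = (\<lambda>s. Complex ((\<lambda>p. a * snd p) (Re (\<gamma> s), Im (\<gamma> s))) ((\<lambda>p. d * fst p) (Re (\<gamma> s), Im (\<gamma> s))))"
    have c3: "continuous_on UNIV (\<lambda>p::real\<times>real. d*(fst p)^3)" "continuous_on UNIV (\<lambda>p::real\<times>real. a * snd p)"
       "continuous_on UNIV (\<lambda>p::real\<times>real. d * fst p)" by (intro continuous_intros)+
    have pF: "path F" "pathfinish F = pathstart F" unfolding F_def \<gamma>_def
      using path_F[OF cont] by (auto simp: pathfinish_def pathstart_def circ10)
    have pG: "path G" "pathfinish G = pathstart G" unfolding G_def \<gamma>_def
      using path_F[OF cont(1) c3(1)] by (auto simp: pathfinish_def pathstart_def circ10)
    have pL: "path L" "pathfinish L = pathstart L" unfolding L_def \<gamma>_def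
      using path_F[OF c3(2) c3(3)] by (auto simp: pathfinish_def pathstart_def circ10)
    have "winding_number G 0 = winding_number F 0"
      by (rule winding_number_loops_linear_eq[OF pF(1) pG(1) pF(2) pG(2)], rule seg0)
        (use pt1[OF xy(1) xy(2) xy(3)] in \<open>auto simp: F_def G_def\<close>)
    moreover have "winding_number L 0 = winding_number G 0"
      by (rule winding_number_loops_linear_eq[OF pG(1) pL(1) pG(2) pL(2)], rule seg0)
        (use pt2[OF xy(1) xy(2) xy(3)] in \<open>auto simp: L_def G_def\<close>)
    moreover have "winding_number L 0 = of_int D0"
    proof (cases "a*d > 0")
      case True
      have pc: "path (cnj \<circ> \<gamma>)" "pathfinish (cnj \<circ> \<gamma>) = pathstart (cnj \<circ> \<gamma>)"
        unfolding \<gamma>_def path_def[symmetric] using path_circlepath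
        by (auto simp: pathfinish_def pathstart_def intro!: continuous_intros path_continuous_image)
          (metis pathfinish_circlepath pathstart_circlepath pathfinish_def pathstart_def)
      have "winding_number (cnj \<circ> \<gamma>) 0 = -1"
        using winding_number_cnj[of \<gamma> 0] r winding_number_circlepath_centre[of r 0] unfolding \<gamma>_def by simp
      moreover have "winding_number (cnj \<circ> \<gamma>) 0 = winding_number L 0"
      proof (rule winding_number_loops_linear_eq[OF pL(1) pc(1) pL(2) pc(2)], rule seg0)
        fix t u :: real assume u: "0 \<le> u" "u \<le> 1"
        define x where "x = Re (\<gamma> t)" define y where "y = Im (\<gamma> t)"
        have nz: "(x,y) \<noteq> (0,0)" using xy(3)[of t] by (simp add: x_def y_def)
        have "((1-u)*(a*y) + u*x)*((1-u)*d) - ((1-u)*(d*x) - u*y)*u = ((1-u)^2*(a*d) + u^2)*y"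
          by (simp add: algebra_simps power2_eq_square)
        moreover have "(1-u)^2*(a*d) + u^2 > 0"
        proof (cases "u = 1")
          case True then show ?thesis by simp
        next
          case False then have "(1-u)^2 > 0" by simp
          then show ?thesis using True by (simp add: add_pos_nonneg)
        qed
        ultimately have "((1-u)*(a*y) + u*x) = 0 \<Longrightarrow> ((1-u)*(d*x) - u*y) = 0 \<Longrightarrow> False"
          using nz u d by (cases "u = 0") auto
        then show "(1-u)*Re (L t) + u*Re ((cnj \<circ> \<gamma>) t) \<noteq> 0 \<or> (1-u)*Im (L t) + u*Im ((cnj \<circ> \<gamma>) t) \<noteq> 0"
          by (auto simp: L_def x_def y_def)
      qed
      ultimately show ?thesis using True by (simp add: D0_def)
    next
      case False
      then have ad: "a*d < 0" using a d by (simp add: not_less order.order_iff_strict)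
      have pc: "path \<gamma>" "pathfinish \<gamma> = pathstart \<gamma>" unfolding \<gamma>_def by auto
      have "winding_number \<gamma> 0 = 1" unfolding \<gamma>_def using r winding_number_circlepath_centre by simp
      moreover have "winding_number \<gamma> 0 = winding_number L 0"
      proof (rule winding_number_loops_linear_eq[OF pL(1) pc(1) pL(2) pc(2)], rule seg0)
        fix t u :: real assume u: "0 \<le> u" "u \<le> 1"
        define x where "x = Re (\<gamma> t)" define y where "y = Im (\<gamma> t)"
        have nz: "(x,y) \<noteq> (0,0)" using xy(3)[of t] by (simp add: x_def y_def)
        have "((1-u)*(a*y) + u*x)*((1-u)*d) - ((1-u)*(d*x) + u*y)*u = ((1-u)^2*(a*d) - u^2)*y"
          by (simp add: algebra_simps power2_eq_square)
        moreover have "(1-u)^2*(a*d) - u^2 < 0"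
        proof (cases "u = 1")
          case True then show ?thesis by simp
        next
          case False then have "(1-u)^2 > 0" by simp
          then have "(1-u)^2*(a*d) < 0" using ad by (simp add: mult_pos_neg)
          then show ?thesis by (smt (verit) zero_le_power2)
        qed
        ultimately have "((1-u)*(a*y) + u*x) = 0 \<Longrightarrow> ((1-u)*(d*x) + u*y) = 0 \<Longrightarrow> False"
          using nz u d by (cases "u = 0") auto
        then show "(1-u)*Re (L t) + u*Re (\<gamma> t) \<noteq> 0 \<or> (1-u)*Im (L t) + u*Im (\<gamma> t) \<noteq> 0"
          by (auto simp: L_def x_def y_def)
      qed
      ultimately show ?thesis using False by (simp add: D0_def)
    qed
    ultimately show ?thesis unfolding F_def \<gamma>_def by (simp add: Let_def)
  qed
  have "local_degree f1 f2 = D0"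
    unfolding local_degree_def
  proof (rule the_equality)
    show "\<exists>e>0. \<forall>r\<in>{0<..<e}. winding_number (\<lambda>s. let z = circlepath 0 r s in Complex (f1 (Re z, Im z)) (f2 (Re z, Im z))) 0 = of_int D0"
      using W r0 by auto
  next
    fix d' assume "\<exists>e>0. \<forall>r\<in>{0<..<e}. winding_number (\<lambda>s. let z = circlepath 0 r s in Complex (f1 (Re z, Im z)) (f2 (Re z, Im z))) 0 = of_int d'"
    then obtain e where e: "e > 0" "\<forall>r\<in>{0<..<e}. winding_number (\<lambda>s. let z = circlepath 0 r s in Complex (f1 (Re z, Im z)) (f2 (Re z, Im z))) 0 = of_int d'" by blast
    define r where "r = min e r0 / 2"
    have "r \<in> {0<..<e}" "0 < r" "r < r0" using e r0 by (auto simp: r_def)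
    then have "(of_int d' :: complex) = of_int D0" using e W by metis
    then show "d' = D0" by simp
  qed
  then show ?thesis by (simp add: D0_def)
qed



lemma dx_mult_fun: "C1 u \<Longrightarrow> C1 v \<Longrightarrow> dx (\<lambda>p. u p * v p) = (\<lambda>p. dx u p * v p + u p * dx v p)"
  using C1_mult(2) by blast
lemma dy_mult_fun: "C1 u \<Longrightarrow> C1 v \<Longrightarrow> dy (\<lambda>p. u p * v p) = (\<lambda>p. dy u p * v p + u p * dy v p)"
  using C1_mult(3) by blast
lemma dx_diff_fun: "C1 u \<Longrightarrow> C1 v \<Longrightarrow> dx (\<lambda>p. u p - v p) = (\<lambda>p. dx u p - dx v p)"
  using C1_diff(2) by blast
lemma dy_diff_fun: "C1 u \<Longrightarrow> C1 v \<Longrightarrow> dy (\<lambda>p. u p - v p) = (\<lambda>p. dy u p - dy v p)"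
  using C1_diff(3) by blast
lemma dx_add_fun: "C1 u \<Longrightarrow> C1 v \<Longrightarrow> dx (\<lambda>p. u p + v p) = (\<lambda>p. dx u p + dx v p)"
  using C1_add(2) by blast
lemma dy_add_fun: "C1 u \<Longrightarrow> C1 v \<Longrightarrow> dy (\<lambda>p. u p + v p) = (\<lambda>p. dy u p + dy v p)"
  using C1_add(3) by blast

lemmas C1_rules = C1_mult(1) C1_diff(1) C1_add(1) smooth2_C1 smooth2_D(2) smooth2_D(3)
lemmas d_rules = dx_mult_fun dy_mult_fun dx_diff_fun dy_diff_fun dx_add_fun dy_add_fun

lemma jac_fun: "jac f1 f2 = (\<lambda>p. dx f1 p * dy f2 p - dy f1 p * dx f2 p)"
  by (rule ext) (simp add: jac_def)

lemma jac_facts: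
  assumes s1: "smooth2 f1" and s2: "smooth2 f2"
  shows "C1 (jac f1 f2)" "C1 (dx (jac f1 f2))" "C1 (dy (jac f1 f2))"
    "dx (jac f1 f2) p = dx (dx f1) p * dy f2 p + dx f1 p * dx (dy f2) p - (dx (dy f1) p * dx f2 p + dy f1 p * dx (dx f2) p)"
    "dy (jac f1 f2) p = dy (dx f1) p * dy f2 p + dx f1 p * dy (dy f2) p - (dy (dy f1) p * dx f2 p + dy f1 p * dy (dx f2) p)"
    "dx (dx (jac f1 f2)) p = dx (dx (dx f1)) p * dy f2 p + dx (dx f1) p * dx (dy f2) p + (dx (dx f1) p * dx (dy f2) p + dx f1 p * dx (dx (dy f2)) p)
       - (dx (dx (dy f1)) p * dx f2 p + dx (dy f1) p * dx (dx f2) p + (dx (dy f1) p * dx (dx f2) p + dy f1 p * dx (dx (dx f2)) p))"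
  unfolding jac_fun using s1 s2 by (simp_all add: C1_rules d_rules)


lemma curve2:
  assumes F: "C1 F" "C1 (dx F)" "C1 (dy F)"
    and ph: "(\<phi> has_real_derivative \<phi>1 0) (at 0)" and ph1: "(\<phi>1 has_real_derivative p2) (at 0)"
    and z: "\<phi>1 0 = 0"
  shows "((\<lambda>t. dx F (t,\<phi> t) + dy F (t,\<phi> t) * \<phi>1 t) has_real_derivative (dx (dx F) (0,\<phi> 0) + dy F (0,\<phi> 0) * p2)) (at 0)"
proof -
  have 1: "((\<lambda>t. dx F (t,\<phi> t)) has_real_derivative dx (dx F) (0,\<phi> 0) + dy (dx F) (0,\<phi> 0) * \<phi>1 0) (at 0)"
    using C1_chain[OF F(2) ph] .
  have 2: "((\<lambda>t. dy F (t,\<phi> t)) has_real_derivative dx (dy F) (0,\<phi> 0) + dy (dy F) (0,\<phi> 0) * \<phi>1 0) (at 0)"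
    using C1_chain[OF F(3) ph] .
  from DERIV_add[OF 1 DERIV_mult[OF 2 ph1]] show ?thesis using z by (simp add: mult.commute)
qed

lemma deriv2_curve:
  assumes g: "smooth2 g" and S: "open S" "0 \<in> S"
    and ph: "\<forall>t\<in>S. (\<phi> has_real_derivative \<phi>1 t) (at t)" and ph1: "(\<phi>1 has_real_derivative p2) (at 0)"
    and z: "\<phi>1 0 = 0" "\<phi> 0 = 0"
  shows "deriv (deriv (\<lambda>t. g (t,\<phi> t))) 0 = dx (dx g) (0,0) + dy g (0,0) * p2"
proof -
  have C: "C1 g" "C1 (dx g)" "C1 (dy g)" using g by (simp_all add: C1_rules)
  have "eventually (\<lambda>t. deriv (\<lambda>t. g (t,\<phi> t)) t = dx g (t,\<phi> t) + dy g (t,\<phi> t) * \<phi>1 t) (nhds 0)"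
    unfolding eventually_nhds
    by (rule exI[of _ S]) (use S ph in \<open>auto intro!: DERIV_imp_deriv C1_chain[OF C(1)]\<close>)
  then have "deriv (deriv (\<lambda>t. g (t,\<phi> t))) 0 = deriv (\<lambda>t. dx g (t,\<phi> t) + dy g (t,\<phi> t) * \<phi>1 t) 0"
    by (rule deriv_cong_ev) simp
  also have "\<dots> = dx (dx g) (0,\<phi> 0) + dy g (0,\<phi> 0) * p2"
    by (rule DERIV_imp_deriv[OF curve2[OF C _ ph1 z(1)]]) (use S ph in auto)
  finally show ?thesis using z by simp
qed

lemma zero_on_open_deriv:
  assumes "(f has_real_derivative D) (at t)" "open S" "t \<in> S" "\<And>s. s \<in> S \<Longrightarrow> f s = 0"
  shows "D = 0"
proof -
  have "((\<lambda>s. 0) has_real_derivative 0) (at t)" by simp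
  then have "(f has_real_derivative 0) (at t)"
    by (rule has_field_derivative_transform_within_open[OF _ assms(2,3)]) (use assms(4) in auto)
  then show ?thesis using DERIV_unique assms(1) by blast
qed


theorem mainTheorem15:
  fixes f1 f2 :: "real \<times> real \<Rightarrow> real" and \<phi> :: "real \<Rightarrow> real" and e :: real
  assumes smooth: "smooth2 f1" "smooth2 f2"
    and gen: "one_generic f1 f2"
    and cusp: "cusp_point f1 f2 (0, 0)"
    and f0: "f1 (0, 0) = 0" "f2 (0, 0) = 0"
    and d0: "dx f1 (0, 0) = 0" "dx f2 (0, 0) = 0" "dy f2 (0, 0) = 0" "dy f1 (0, 0) \<noteq> 0"
    and J0: "dx (jac f1 f2) (0, 0) = 0" "dy (jac f1 f2) (0, 0) \<noteq> 0"
    and e: "e > 0"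
    and phi: "smooth1_on {-e<..<e} \<phi>" "\<phi> 0 = 0"
             "\<forall>t\<in>{-e<..<e}. jac f1 f2 (t, \<phi> t) = 0"
  defines "v1 \<equiv> (deriv (deriv (\<lambda>t. f1 (t, \<phi> t))) 0,
                  deriv (deriv (\<lambda>t. f2 (t, \<phi> t))) 0)"
    and "v2 \<equiv> (dx f1 (0, 0) * dx (jac f1 f2) (0, 0) + dy f1 (0, 0) * dy (jac f1 f2) (0, 0),
               dx f2 (0, 0) * dx (jac f1 f2) (0, 0) + dy f2 (0, 0) * dy (jac f1 f2) (0, 0))"
  shows "((\<exists>c>0. v1 = (c * fst v2, c * snd v2)) \<longrightarrow> local_degree f1 f2 = -1) \<and>
         ((\<exists>c<0. v1 = (c * fst v2, c * snd v2)) \<longrightarrow> local_degree f1 f2 = 1)"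
proof -
  define S where "S = {-e<..<e}"
  have S: "open S" "0 \<in> S" using e by (auto simp: S_def)
  obtain \<phi>1 where ph1: "\<And>t. t \<in> S \<Longrightarrow> (\<phi> has_real_derivative \<phi>1 t) (at t)" and s1: "smooth1_on S \<phi>1"
    using phi(1) unfolding S_def by (cases rule: smooth1_on.cases) auto
  obtain \<phi>2 where ph2: "\<And>t. t \<in> S \<Longrightarrow> (\<phi>1 has_real_derivative \<phi>2 t) (at t)"
    using s1 by (cases rule: smooth1_on.cases) auto
  define J where "J = jac f1 f2"
  have CJ: "C1 J" "C1 (dx J)" "C1 (dy J)" unfolding J_def using jac_facts[OF smooth] by auto
  define a where "a = dy f1 (0,0)"
  define P where "P = dx (dx f1) (0,0)"
  define B where "B = dy (dx f2) (0,0)"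
  define D where "D = dx (dx (dx f2)) (0,0)"
  define A where "A = dx (dx f2) (0,0)"
  have a0: "a \<noteq> 0" using d0 by (simp add: a_def)
  have clair: "dx (dy f2) (0,0) = B" unfolding B_def by (rule clairaut0[OF smooth(2)])
  have dxJ: "dx J (0,0) = - a * A" unfolding J_def jac_facts(4)[OF smooth] using d0 by (simp add: a_def A_def)
  have dyJ: "dy J (0,0) = - a * B" unfolding J_def jac_facts(5)[OF smooth] using d0 by (simp add: a_def B_def)
  have A0: "A = 0" using J0(1) dxJ a0 unfolding J_def by simp
  have Jxx: "dx (dx J) (0,0) = 2*P*B - a*D" unfolding J_def jac_facts(6)[OF smooth]
    using d0 clair A0 by (simp add: a_def P_def D_def A_def)
  have B0: "B \<noteq> 0" using J0(2) dyJ unfolding J_def by auto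
  have K1: "dx J (t,\<phi> t) + dy J (t,\<phi> t) * \<phi>1 t = 0" if t: "t \<in> S" for t
    by (rule zero_on_open_deriv[OF C1_chain[OF CJ(1) ph1[OF t]] S(1) t])
      (use phi(3) in \<open>auto simp: S_def J_def\<close>)
  have p10: "\<phi>1 0 = 0" using K1[OF S(2)] phi(2) J0 unfolding J_def by simp
  have K2: "dx (dx J) (0,0) + dy J (0,0) * \<phi>2 0 = 0"
    using zero_on_open_deriv[OF curve2[OF CJ ph1[OF S(2)] ph2[OF S(2)] p10] S] K1 phi(2) by auto
  have ph1': "\<forall>t\<in>S. (\<phi> has_real_derivative \<phi>1 t) (at t)" using ph1 by blast
  have v1: "v1 = (P + a * \<phi>2 0, 0)"
    unfolding v1_def
    using deriv2_curve[OF smooth(1) S ph1' ph2[OF S(2)] p10 phi(2)]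
      deriv2_curve[OF smooth(2) S ph1' ph2[OF S(2)] p10 phi(2)] d0 A0
    by (simp add: a_def P_def A_def)
  have v2: "v2 = (- a*a*B, 0)"
    unfolding v2_def using d0 dyJ unfolding J_def by (simp add: a_def)
  define d where "d = D/6 - B*P/(2*a)"
  have sixad: "6*a*d = a*D - 3*P*B" using a0 by (simp add: d_def field_simps)
  have Bv: "B*(P + a*\<phi>2 0) = 3*P*B - a*D" using K2 Jxx dyJ by (simp add: algebra_simps)
  have main: "local_degree f1 f2 = (if c > 0 then -1 else 1)" if c: "c \<noteq> 0" "v1 = (c * fst v2, c * snd v2)" for c
  proof -
    have "P + a*\<phi>2 0 = c*(-a*a*B)" using c(2) v1 v2 by simp
    then have "6*a*d = c*a*a*B*B" using sixad Bv by (simp add: algebra_simps)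
    then have ad: "a*d*6 = c*(a*a*B*B)" by (simp add: algebra_simps)
    have "a*a*B*B = (a*B)^2" by (simp add: power2_eq_square ac_simps)
    moreover have "(a*B)^2 > 0" using a0 B0 by simp
    ultimately have pos: "a*a*B*B > 0" by simp
    have dne: "d \<noteq> 0" using ad c(1) pos by auto
    have E: "a*d = c*(a*a*B*B)/6" using ad by simp
    have gen: "X > 0 \<Longrightarrow> (c*X/6 > 0 \<longleftrightarrow> c > 0)" for X :: real
      by (simp add: zero_less_mult_iff zero_less_divide_iff)
    have sg: "a*d > 0 \<longleftrightarrow> c > 0" using gen[OF pos] E by (simp only:)
    obtain r0 where r0: "r0 > 0"
      "\<forall>x y. \<bar>x\<bar> \<le> r0 \<longrightarrow> \<bar>y\<bar> \<le> r0 \<longrightarrow> f1 (x,y) = 0 \<longrightarrow> \<bar>f2 (x,y) - d*x^3\<bar> \<le> \<bar>d\<bar>/2*\<bar>x\<bar>^3"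
      "\<forall>y. \<bar>y\<bar> \<le> r0 \<longrightarrow> y \<noteq> 0 \<longrightarrow> a*y*f1 (0,y) > 0"
      using local_est[OF smooth f0 d0(1,2,3) a_def a0 _ _ dne] A0 d_def
      unfolding A_def D_def B_def P_def by blast
    have "local_degree f1 f2 = (if a*d > 0 then -1 else 1)"
      by (rule degree_core[OF C1_cont[OF smooth2_C1[OF smooth(1)]] C1_cont[OF smooth2_C1[OF smooth(2)]] a0 dne r0(1)])
        (use r0 in auto)
    then show ?thesis using sg by simp
  qed
  show ?thesis
  proof (intro conjI impI)
    assume "\<exists>c>0. v1 = (c * fst v2, c * snd v2)"
    then obtain c where c: "c > 0" "v1 = (c * fst v2, c * snd v2)" by blast
    then have "c \<noteq> 0" by simp
    from main[OF this c(2)] c(1) show "local_degree f1 f2 = -1" by simp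
  next
    assume "\<exists>c<0. v1 = (c * fst v2, c * snd v2)"
    then obtain c where c: "c < 0" "v1 = (c * fst v2, c * snd v2)" by blast
    then have "c \<noteq> 0" by simp
    from main[OF this c(2)] c(1) show "local_degree f1 f2 = 1" by simp
  qed
qed


end
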